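(* Let $m\ge2$ and $t\ge1$ be integers. There exists $a\in\{1,2,\dots,m\}$ with $f_2^t(a)=a$ if and only if $\gcd(m+1,2^t+1)>1$ or $\gcd(m+1,2^t-1)>1$. Moreover, every $a\in\{1,\dots,m\}$ with $f_2^t(a)=a$ can be written as $a=\frac{\xi(m+1)}{2^t+1}$ or $a=\frac{\xi(m+1)}{2^t-1}$ for some odd integer $\xi$ with $1\le\xi<2^t$.
   Context: For an integer $m\ge2$, $X=\{0,1,\dots,m^2-1\}$, each element written with exactly two base-$m$ digits (leading zeros allowed), and $f(x)=D(x)-A(x)$ is the two-digit base-$m$ Kaprekar map ($D(x)$, $A(x)$: digits of $x$ in nonincreasing, resp. nondecreasing, order). The map $f_2:\{0,1,\dots,m\}\to\{0,1,\dots,m\}$ is defined by $f(a(m-1))=f_2(a)(m-1)$; explicitly $f_2(0)=0$ and $f_2(a)=|2a-m-1|$ for $1\le a\le m$. $f_2^t$ denotes the $t$-fold iterate. *)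

theory Defs
  imports Main
begin

definition f2 :: "nat \<Rightarrow> nat \<Rightarrow> nat" where
  "f2 m a = (if a = 0 then 0 else nat \<bar>2 * int a - int m - 1\<bar>)"

end

theory Submission
  imports Defs
begin

lemma f2_int: "a \<noteq> 0 \<Longrightarrow> int (f2 m a) = \<bar>2 * int a - (int m + 1)\<bar>"
  by (simp add: f2_def)

lemma iter_form:
  fixes m a :: nat
  assumes "a \<noteq> 0"
  shows "(f2 m ^^ Suc k) a = 0 \<or> (\<exists>c::int. odd c \<and> 0 < c \<and> c < 2 ^ Suc k \<and>
           int ((f2 m ^^ Suc k) a) = \<bar>2 ^ Suc k * int a - c * (int m + 1)\<bar>)"
proof (induction k)
  case 0
  show ?case using f2_int[OF assms, of m] by (intro disjI2 exI[of _ 1]) auto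
next
  case (Suc k)
  define y where "y = (f2 m ^^ Suc k) a"
  have it: "(f2 m ^^ Suc (Suc k)) a = f2 m y" by (simp add: y_def)
  show ?case
  proof (cases "y = 0")
    case True
    have "f2 m y = 0" using True by (simp add: f2_def)
    then show ?thesis by (intro disjI1) (simp only: it)
  next
    case False
    then obtain c :: int where c: "odd c" "0 < c" "c < 2 ^ Suc k"
      "int y = \<bar>2 ^ Suc k * int a - c * (int m + 1)\<bar>"
    proof -
      have "y = 0 \<or> (\<exists>c::int. odd c \<and> 0 < c \<and> c < 2 ^ Suc k \<and>
           int y = \<bar>2 ^ Suc k * int a - c * (int m + 1)\<bar>)" using Suc.IH unfolding y_def .
      then show ?thesis using False that by blast
    qed
    define Y where "Y = 2 ^ Suc k * int a - c * (int m + 1)"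
    have fy: "int (f2 m y) = \<bar>2 * \<bar>Y\<bar> - (int m + 1)\<bar>" using f2_int[OF False, of m] c(4) Y_def by simp
    show ?thesis
    proof (cases "Y \<ge> 0")
      case True
      have "int (f2 m y) = \<bar>2 ^ Suc (Suc k) * int a - (2*c+1) * (int m + 1)\<bar>"
        using fy True Y_def by (simp add: algebra_simps)
      moreover have "2*c+1 < 2 ^ Suc (Suc k)" using c(3) by simp
      ultimately show ?thesis using it c by (intro disjI2 exI[of _ "2*c+1"]) auto
    next
      case False
      have "int (f2 m y) = \<bar>-(2 ^ Suc (Suc k) * int a - (2*c-1) * (int m + 1))\<bar>"
        using fy False Y_def by (simp add: algebra_simps)
      then have "int (f2 m y) = \<bar>2 ^ Suc (Suc k) * int a - (2*c-1) * (int m + 1)\<bar>"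
        by (simp only: abs_minus_cancel)
      moreover have "2*c-1 < 2 ^ Suc (Suc k)" using c(3) by simp
      ultimately show ?thesis using it c by (intro disjI2 exI[of _ "2*c-1"]) auto
    qed
  qed
qed

lemma orbit_form:
  fixes m q d :: nat
  assumes n: "int m + 1 = int q * int d" and dodd: "odd d" and d1: "d > 1" and q1: "q \<ge> 1"
  shows "\<exists>p::int. odd p \<and> 0 < p \<and> p < int d \<and> int ((f2 m ^^ k) q) = int q * p \<and>
           (\<exists>s::int. (s = 1 \<or> s = -1) \<and> int d dvd (p - s * 2 ^ k))"
proof (induction k)
  case 0
  show ?case using d1 by (intro exI[of _ 1]) auto
next
  case (Suc k)
  then obtain p :: int and s where p: "odd p" "0 < p" "p < int d" "int ((f2 m ^^ k) q) = int q * p"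
    and s: "s = 1 \<or> s = -1" "int d dvd (p - s * 2 ^ k)" by blast
  define y where "y = (f2 m ^^ k) q"
  have "int q * p > 0" using p(2) q1 by simp
  then have yne: "y \<noteq> 0" using p(4) y_def by auto
  have "int (f2 m y) = \<bar>2 * (int q * p) - int q * int d\<bar>" using f2_int[OF yne, of m] p(4) n y_def by simp
  also have "\<dots> = \<bar>int q * (2 * p - int d)\<bar>" by (simp add: algebra_simps)
  also have "\<dots> = int q * \<bar>2 * p - int d\<bar>" by (simp add: abs_mult)
  finally have fy: "int (f2 m y) = int q * \<bar>2 * p - int d\<bar>" .
  define e :: int where "e = (if 2 * p - int d \<ge> 0 then 1 else -1)"
  have pe: "\<bar>2 * p - int d\<bar> = e * (2 * p - int d)" by (simp add: e_def)
  have oddp': "odd \<bar>2 * p - int d\<bar>" using dodd by simp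
  have lt: "\<bar>2 * p - int d\<bar> < int d" using p by simp
  have gt: "0 < \<bar>2 * p - int d\<bar>" using oddp' by (cases "2 * p - int d = 0") auto
  have "e * (2 * p - int d) - (e * s) * 2 ^ Suc k = 2 * e * (p - s * 2 ^ k) - e * int d"
    by (simp add: algebra_simps)
  moreover have "int d dvd 2 * e * (p - s * 2 ^ k) - e * int d" using s(2) by simp
  ultimately have dv: "int d dvd \<bar>2 * p - int d\<bar> - (e * s) * 2 ^ Suc k" using pe by simp
  have es: "e * s = 1 \<or> e * s = -1" using s(1) by (auto simp: e_def)
  show ?case using fy y_def oddp' lt gt dv es by (intro exI[of _ "\<bar>2 * p - int d\<bar>"]) auto
qed

lemma converse:
  fixes m t d :: nat
  assumes m2: "m \<ge> 2" and t1: "t \<ge> 1" and dn: "d dvd m + 1" and d1: "d > 1"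
    and dt: "int d dvd 2 ^ t + 1 \<or> int d dvd 2 ^ t - 1"
  shows "\<exists>a\<in>{1..m}. (f2 m ^^ t) a = a"
proof -
  obtain q where q: "m + 1 = d * q" using dn by blast
  have oddt: "odd ((2::int) ^ t + 1)" "odd ((2::int) ^ t - 1)" using t1 by auto
  have dodd: "odd d"
  proof
    assume "even d" then have "even (int d)" by simp
    then show False using dt oddt by (meson dvd_trans)
  qed
  have q1: "q \<ge> 1" using q by (cases q) auto
  have "2 * q \<le> d * q" using d1 by (intro mult_le_mono1) simp
  then have qm: "q \<le> m" using q q1 by linarith
  have "int (m + 1) = int (d * q)" using q by simp
  then have n: "int m + 1 = int q * int d" by (simp add: mult.commute)
  obtain p :: int and s where p: "odd p" "0 < p" "p < int d" "int ((f2 m ^^ t) q) = int q * p"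
    and s: "s = 1 \<or> s = -1" "int d dvd (p - s * 2 ^ t)"
    using orbit_form[OF n dodd d1 q1, of t] by blast
  obtain r :: int where r: "r = 1 \<or> r = -1" "int d dvd 2 ^ t - r"
    using dt by (metis diff_minus_eq_add)
  have "int d dvd (p - s * 2 ^ t) + s * (2 ^ t - r)" using s r by simp
  then have dv: "int d dvd p - s * r" by (simp add: algebra_simps)
  have "s * r = 1 \<or> s * r = -1" using s(1) r(1) by auto
  then have "p = 1"
  proof
    assume "s * r = 1"
    then have "int d dvd p - 1" using dv by simp
    moreover have "0 \<le> p - 1" "p - 1 < int d" using p by auto
    ultimately have "p - 1 = 0" using zdvd_imp_le[of "int d" "p - 1"] by (cases "p - 1 = 0") auto
    then show "p = 1" by simp
  next
    assume "s * r = -1"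
    then have "int d dvd p + 1" using dv by simp
    moreover have "0 < p + 1" "p + 1 \<le> int d" using p by auto
    ultimately have "p + 1 = int d" using zdvd_imp_le[of "int d" "p + 1"] by auto
    then have "p = int d - 1" by simp
    then have "even p" using dodd by simp
    then show "p = 1" using p(1) by simp
  qed
  then have "(f2 m ^^ t) q = q" using p(4) by simp
  then show ?thesis using q1 qm by auto
qed

theorem theorem3p3p1:
  fixes m t :: nat
  assumes "m \<ge> 2" and "t \<ge> 1"
  shows "((\<exists>a\<in>{1..m}. (f2 m ^^ t) a = a) \<longleftrightarrow>
            (gcd (m + 1) (2 ^ t + 1) > 1 \<or> gcd (m + 1) (2 ^ t - 1) > 1))
       \<and> (\<forall>a\<in>{1..m}. (f2 m ^^ t) a = a \<longrightarrow>
            (\<exists>\<xi>::nat. odd \<xi> \<and> 1 \<le> \<xi> \<and> \<xi> < 2 ^ t \<and>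
               (a * (2 ^ t + 1) = \<xi> * (m + 1) \<or> a * (2 ^ t - 1) = \<xi> * (m + 1))))"
proof -
  have t1: "(1::nat) \<le> 2 ^ t" by simp
  have im: "int (2 ^ t - 1) = 2 ^ t - 1" using t1 by (simp add: of_nat_diff)
  have form: "\<forall>a\<in>{1..m}. (f2 m ^^ t) a = a \<longrightarrow>
            (\<exists>\<xi>::nat. odd \<xi> \<and> 1 \<le> \<xi> \<and> \<xi> < 2 ^ t \<and>
               (a * (2 ^ t + 1) = \<xi> * (m + 1) \<or> a * (2 ^ t - 1) = \<xi> * (m + 1)))"
  proof (intro ballI impI)
    fix a assume a: "a \<in> {1..m}" and fa: "(f2 m ^^ t) a = a"
    obtain k where k: "t = Suc k" using assms(2) by (cases t) auto
    have a0: "a \<noteq> 0" using a by auto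
    obtain c :: int where c: "odd c" "0 < c" "c < 2 ^ t"
       "int a = \<bar>2 ^ t * int a - c * (int m + 1)\<bar>"
      using iter_form[OF a0, where m=m and k=k] fa a0 k by auto
    have cn: "int (nat c) = c" using c by simp
    have "odd (nat c)" using c(1,2) by (simp add: even_nat_iff)
    moreover have "1 \<le> nat c" "nat c < 2 ^ t" using c(2,3) by (auto simp: nat_less_iff)
    moreover have "a * (2 ^ t + 1) = nat c * (m + 1) \<or> a * (2 ^ t - 1) = nat c * (m + 1)"
    proof (cases "2 ^ t * int a - c * (int m + 1) \<ge> 0")
      case True
      then have "int a * (2 ^ t - 1) = c * (int m + 1)" using c(4) by (simp add: algebra_simps)
      then have "int (a * (2 ^ t - 1)) = int (nat c * (m + 1))" using im cn by (simp add: algebra_simps)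
      then have "a * (2 ^ t - 1) = nat c * (m + 1)" by (simp only: of_nat_eq_iff)
      then show ?thesis by blast
    next
      case False
      then have "int a * (2 ^ t + 1) = c * (int m + 1)" using c(4) by (simp add: algebra_simps)
      then have "int (a * (2 ^ t + 1)) = int (nat c * (m + 1))" using cn by (simp add: algebra_simps)
      then have "a * (2 ^ t + 1) = nat c * (m + 1)" by (simp only: of_nat_eq_iff)
      then show ?thesis by blast
    qed
    ultimately show "\<exists>\<xi>::nat. odd \<xi> \<and> 1 \<le> \<xi> \<and> \<xi> < 2 ^ t \<and>
               (a * (2 ^ t + 1) = \<xi> * (m + 1) \<or> a * (2 ^ t - 1) = \<xi> * (m + 1))" by blast
  qed
  have fwd: "gcd (m + 1) (2 ^ t + 1) > 1 \<or> gcd (m + 1) (2 ^ t - 1) > 1"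
    if ex: "\<exists>a\<in>{1..m}. (f2 m ^^ t) a = a"
  proof -
    obtain a where a: "a \<in> {1..m}" "(f2 m ^^ t) a = a" using ex by blast
    obtain \<xi> :: nat where xi: "a * (2 ^ t + 1) = \<xi> * (m + 1) \<or> a * (2 ^ t - 1) = \<xi> * (m + 1)"
      using form a by blast
    have nd: "\<not> (m + 1) dvd a" using a(1) by (auto dest: dvd_imp_le)
    have g: "gcd (m + 1) x > 1" if "(m + 1) dvd a * x" for x :: nat
    proof (rule ccontr)
      assume "\<not> gcd (m + 1) x > 1"
      moreover have "gcd (m + 1) x \<noteq> 0" by simp
      ultimately have "gcd (m + 1) x = 1" by linarith
      then have "coprime (m + 1) x" by (simp add: coprime_iff_gcd_eq_1)
      then have "(m + 1) dvd a" using that coprime_dvd_mult_left_iff by blast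
      then show False using nd by simp
    qed
    show ?thesis using xi g by (metis dvd_triv_right)
  qed
  have bwd: "\<exists>a\<in>{1..m}. (f2 m ^^ t) a = a"
    if h: "gcd (m + 1) (2 ^ t + 1) > 1 \<or> gcd (m + 1) (2 ^ t - 1) > 1"
    using h
  proof
    assume "gcd (m + 1) (2 ^ t + 1) > 1"
    moreover have "int (gcd (m + 1) (2 ^ t + 1)) dvd 2 ^ t + 1"
    proof -
      have "int (gcd (m + 1) (2 ^ t + 1)) dvd int (2 ^ t + 1)" by (simp only: of_nat_dvd_iff) simp
      then show ?thesis by (simp add: add.commute)
    qed
    ultimately show ?thesis using converse[OF assms, of "gcd (m + 1) (2 ^ t + 1)"] by auto
  next
    assume "gcd (m + 1) (2 ^ t - 1) > 1"
    moreover have "int (gcd (m + 1) (2 ^ t - 1)) dvd 2 ^ t - 1"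
    proof -
      have "int (gcd (m + 1) (2 ^ t - 1)) dvd int (2 ^ t - 1)" by (simp only: of_nat_dvd_iff) simp
      then show ?thesis using im by simp
    qed
    ultimately show ?thesis using converse[OF assms, of "gcd (m + 1) (2 ^ t - 1)"] by auto
  qed
  show ?thesis using form fwd bwd by blast
qed

end
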